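(* For a random threshold graph $G$ on $n\ge1$ vertices and every integer $d\ge0$, $$P(\mathrm{degen}(G)=d)=\left(\tfrac12\right)^{n-1}\binom{n-1}{d}.$$
   Context: A threshold graph on $n\ge1$ vertices is built from a base vertex $v_0$ by successively adding $v_1,\dots,v_{n-1}$, each either isolated (adjacent to no earlier vertex) or dominating (adjacent to all earlier vertices); its creation sequence $\mathrm{seq}(G)=s_1\cdots s_{n-1}$ has $s_i=1$ if $v_i$ is dominating and $s_i=0$ otherwise, and each unlabeled threshold graph on $n$ vertices corresponds to exactly one binary string of length $n-1$. A random threshold graph on $n$ vertices is one whose creation sequence is uniformly distributed over all $2^{n-1}$ binary strings of length $n-1$. The degeneracy $\mathrm{degen}(G)$ is the maximum over nonempty induced subgraphs $H$ of $G$ of the minimum degree of $H$. *)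

theory Defs
  imports "HOL-Probability.Probability_Mass_Function"
begin

text \<open>Threshold graph on vertices 0..<n built from creation sequence s (a bool list of
length n-1; s!(i-1) = True iff vertex v_i is dominating).\<close>

definition thr_adj :: "bool list \<Rightarrow> nat \<Rightarrow> nat \<Rightarrow> bool" where
  "thr_adj s u v \<longleftrightarrow> u \<noteq> v \<and> (if u < v then s ! (v - 1) else s ! (u - 1))"

definition thr_vertices :: "bool list \<Rightarrow> nat set" where
  "thr_vertices s = {0..length s}"

definition min_degree :: "('a \<Rightarrow> 'a \<Rightarrow> bool) \<Rightarrow> 'a set \<Rightarrow> nat" where
  "min_degree adj H = Min ((\<lambda>v. card {w \<in> H. adj v w}) ` H)"

definition degen :: "('a \<Rightarrow> 'a \<Rightarrow> bool) \<Rightarrow> 'a set \<Rightarrow> nat" where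
  "degen adj V = Max ((\<lambda>H. min_degree adj H) ` {H. H \<subseteq> V \<and> H \<noteq> {}})"

definition random_threshold_seq :: "nat \<Rightarrow> bool list pmf" where
  "random_threshold_seq n = pmf_of_set {s. length s = n - 1}"

end

theory Submission
  imports Defs
begin

definition Dset :: "bool list \<Rightarrow> nat set" where
  "Dset s = {i\<in>{1..length s}. s ! (i - 1)}"

lemma degen_eq: "degen (thr_adj s) (thr_vertices s) = card (Dset s)"
proof -
  let ?V = "thr_vertices s"
  let ?A = "(\<lambda>H. min_degree (thr_adj s) H) ` {H. H \<subseteq> ?V \<and> H \<noteq> {}}"
  have finV: "finite ?V" by (simp add: thr_vertices_def)
  have finD: "finite (Dset s)" by (simp add: Dset_def)
  have fin: "finite ?A" using finV by (simp add: finite_subset)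
  define H0 where "H0 = insert 0 (Dset s)"
  have H0V: "H0 \<subseteq> ?V" by (auto simp: H0_def Dset_def thr_vertices_def)
  have 0: "0 \<notin> Dset s" by (simp add: Dset_def)
  have nb: "{w \<in> H0. thr_adj s v w} = H0 - {v}" if "v \<in> H0" for v
  proof -
    have "thr_adj s v w" if "w \<in> H0" "w \<noteq> v" for w
      using that \<open>v \<in> H0\<close> by (auto simp: H0_def Dset_def thr_adj_def)
    moreover have "w \<noteq> v" if "thr_adj s v w" for w using that by (simp add: thr_adj_def)
    ultimately show ?thesis by blast
  qed
  have cH: "card (H0 - {v}) = card (Dset s)" if "v \<in> H0" for v
    using that finD 0 by (simp add: H0_def)
  have md: "min_degree (thr_adj s) H0 = card (Dset s)"
  proof -
    have "(\<lambda>v. card {w \<in> H0. thr_adj s v w}) ` H0 = {card (Dset s)}"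
      using nb cH by (auto simp: H0_def)
    then show ?thesis by (simp add: min_degree_def)
  qed
  have upper: "min_degree (thr_adj s) H \<le> card (Dset s)" if H: "H \<subseteq> ?V" "H \<noteq> {}" for H
  proof -
    have finH: "finite H" using H finV finite_subset by blast
    obtain v where v: "v \<in> H" "{w \<in> H. thr_adj s v w} \<subseteq> Dset s"
    proof (cases "H \<subseteq> Dset s")
      case True
      with H show ?thesis using that by blast
    next
      case False
      then obtain v where v: "v \<in> H" "v \<notin> Dset s" by blast
      have "{w \<in> H. thr_adj s v w} \<subseteq> Dset s"
      proof
        fix w assume w: "w \<in> {w \<in> H. thr_adj s v w}"
        show "w \<in> Dset s"
        proof (cases "w < v")
          case True
          with w v H show ?thesis by (auto simp: thr_adj_def Dset_def thr_vertices_def)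
        next
          case False
          with w v H show ?thesis by (auto simp: thr_adj_def Dset_def thr_vertices_def)
        qed
      qed
      then show ?thesis using that v by blast
    qed
    have "min_degree (thr_adj s) H \<le> card {w \<in> H. thr_adj s v w}"
      unfolding min_degree_def using finH v by (intro Min_le) auto
    also have "\<dots> \<le> card (Dset s)" using v finD by (intro card_mono) auto
    finally show ?thesis .
  qed
  show ?thesis unfolding degen_def
  proof (rule Max_eqI[OF fin])
    show "y \<le> card (Dset s)" if "y \<in> ?A" for y using that upper by auto
    show "card (Dset s) \<in> ?A" using md H0V by (auto simp: H0_def intro!: image_eqI[of _ _ H0])
  qed
qed

lemma count_lists: "card {s :: bool list. length s = m \<and> card (Dset s) = d} = m choose d"
proof -
  have "bij_betw Dset {s :: bool list. length s = m \<and> card (Dset s) = d} {B. B \<subseteq> {1..m} \<and> card B = d}"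
  proof (rule bij_betw_byWitness[where f' = "\<lambda>B. map (\<lambda>i. Suc i \<in> B) [0..<m]"])
    show "\<forall>a\<in>{s :: bool list. length s = m \<and> card (Dset s) = d}. map (\<lambda>i. Suc i \<in> Dset a) [0..<m] = a"
      by (auto simp: Dset_def intro!: nth_equalityI)
    show "\<forall>a'\<in>{B. B \<subseteq> {1..m} \<and> card B = d}. Dset (map (\<lambda>i. Suc i \<in> a') [0..<m]) = a'"
    proof
      fix B assume B: "B \<in> {B. B \<subseteq> {1..m} \<and> card B = d}"
      have "Dset (map (\<lambda>i. Suc i \<in> B) [0..<m]) = B"
      proof (rule set_eqI)
        fix x show "x \<in> Dset (map (\<lambda>i. Suc i \<in> B) [0..<m]) \<longleftrightarrow> x \<in> B"
          using B by (cases x) (auto simp: Dset_def)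
      qed
      then show "Dset (map (\<lambda>i. Suc i \<in> B) [0..<m]) = B" .
    qed
    show "Dset ` {s :: bool list. length s = m \<and> card (Dset s) = d} \<subseteq> {B. B \<subseteq> {1..m} \<and> card B = d}"
      by (auto simp: Dset_def)
    show "(\<lambda>B. map (\<lambda>i. Suc i \<in> B) [0..<m]) ` {B. B \<subseteq> {1..m} \<and> card B = d} \<subseteq> {s :: bool list. length s = m \<and> card (Dset s) = d}"
    proof clarify
      fix B assume B: "B \<subseteq> {1..m}" "d = card B"
      have "Dset (map (\<lambda>i. Suc i \<in> B) [0..<m]) = B"
      proof (rule set_eqI)
        fix x show "x \<in> Dset (map (\<lambda>i. Suc i \<in> B) [0..<m]) \<longleftrightarrow> x \<in> B"
          using B by (cases x) (auto simp: Dset_def)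
      qed
      then show "length (map (\<lambda>i. Suc i \<in> B) [0..<m]) = m \<and> card (Dset (map (\<lambda>i. Suc i \<in> B) [0..<m])) = card B"
        by simp
    qed
  qed
  then have "card {s :: bool list. length s = m \<and> card (Dset s) = d} = card {B. B \<subseteq> {1..m} \<and> card B = d}"
    by (rule bij_betw_same_card)
  also have "\<dots> = m choose d" using n_subsets[of "{1..m}" d] by simp
  finally show ?thesis .
qed

theorem mainTheorem13:
  fixes n d :: nat
  assumes "n \<ge> 1"
  shows "measure_pmf.prob (random_threshold_seq n)
           {s. degen (thr_adj s) (thr_vertices s) = d}
         = (1/2) ^ (n - 1) * real ((n - 1) choose d)"
proof -
  let ?S = "{s :: bool list. length s = n - 1}"
  have cS: "card ?S = 2 ^ (n - 1)"
    using card_lists_length_eq[of "UNIV :: bool set" "n - 1"] by simp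
  have fS: "finite ?S" using finite_lists_length_eq[of "UNIV :: bool set" "n - 1"] by simp
  have ne: "?S \<noteq> {}" by (auto intro: exI[of _ "replicate (n - 1) True"])
  have eq: "?S \<inter> {s. degen (thr_adj s) (thr_vertices s) = d} = {s. length s = n - 1 \<and> card (Dset s) = d}"
    by (auto simp: degen_eq)
  show ?thesis
    unfolding random_threshold_seq_def
    using measure_pmf_of_set[OF ne fS] eq cS count_lists[of "n - 1" d]
    by (simp add: power_one_over)
qed

end
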